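(* Let $t,m,n$ be positive integers, $V=\mathbb{C}^t$, $W=\mathbb{C}^{m+n}$, and let $\Omega_{ij}$, $E_{ij}$, $\kappa_{ij}$ ($1\le i,j\le m+n$) be the operators on $\Lambda^{\bullet}(V\otimes W)$ defined in the context. Fix a $\mathfrak{gl}_t$-weight $\alpha$ and a $\mathfrak{gl}_{m+n}$-weight $\beta=(\beta_1,\dots,\beta_{m+n})$, and let $M_{\alpha,\beta}\subset\Lambda^{\bullet}(V\otimes W)$ be the subspace of vectors of $\mathfrak{gl}_t$-weight $\alpha$ and $\mathfrak{gl}_{m+n}$-weight $\beta$ (so $E_{ii}$ acts on it by $\beta_i$). Let $\hbar\in\mathbb{C}$ and $U=\{z\in\mathbb{C}^{m+n}: z_i\neq z_j \text{ for } i\ne j\}$. Then a (local holomorphic) function $f:U\to M_{\alpha,\beta}$ is a flat section of $$\nabla_{KZ}=d-\hbar\sum_{1\le i<j\le m+n}\frac{dz_i-dz_j}{z_i-z_j}\Omega_{ij}$$ if and only if $g=f\cdot\prod_{1\le i<j\le m+n}(z_i-z_j)^{-(\beta_i+\beta_j)\hbar/2}$ is a flat section of $$\nabla_\kappa=d+\frac{\hbar}{2}\sum_{1\le i<j\le m+n}\frac{dz_i-dz_j}{z_i-z_j}\kappa_{ij}.$$ Moreover, with $h=\exp\big(\frac{\hbar}{2}\sum_{1\le i<j\le m+n}(\beta_i-\beta_j)\log(z_i-z_j)\big)$, the gauge transform $h\nabla_\kappa h^{-1}$ on $M_{\alpha,\beta}$ equals the dynamical connection $$\nabla_D=d+\hbar\sum_{1\le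 i<j\le m+n}\frac{dz_i-dz_j}{z_i-z_j}E_{ji}E_{ij}.$$
   Context: $V$ has standard basis $v_1,\dots,v_t$, $W$ has standard basis $w_1,\dots,w_{m+n}$, $x_{a,i}=v_a\otimes w_i$. On $\Lambda^{\bullet}(V\otimes W)$, $x_{a,i}$ is left multiplication and $\partial_{a,i}$ is the odd derivation with $\partial_{a,i}(x_{b,j})=\delta_{ab}\delta_{ij}$. Define $\Omega_{ij}=\sum_{a,b=1}^t x_{a,i}\partial_{b,i}x_{b,j}\partial_{a,j}$ (the $\mathfrak{gl}_t$ Casimir acting in the $i$-th and $j$-th factors of $\Lambda^{\bullet}(V\otimes W)\cong\bigotimes_i\Lambda^{\bullet}(V\otimes w_i)$), $E_{ij}=\sum_{a=1}^t x_{a,i}\partial_{a,j}$ (the action of $\mathfrak{gl}_{m+n}$), and $\kappa_{ij}=E_{ij}E_{ji}+E_{ji}E_{ij}$. The $\mathfrak{gl}_t$-action is $E_{ab}\mapsto\sum_i x_{a,i}\partial_{b,i}$; weights are with respect to diagonal matrices. *)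

theory Defs
  imports "HOL-Analysis.Analysis"
begin

text \<open>The standard basis of V is indexed by a finite linearly
ordered type 'a (so t = CARD('a)), the standard basis of W by a finite linearly
ordered type 'n (so m + n = CARD('n)); the order plays the role of 1 < 2 < ... .
The basis vectors x_(a,i) = v_a (x) w_i of V (x) W are indexed by 'a \<times> 'n, and the
exterior algebra Lambda(V (x) W) is realised as complex ^ (('a \<times> 'n) set): the
coordinate at S is the coefficient of the ordered wedge product of the x_p, p in S,
taken in increasing (lexicographic) order.\<close>

type_synonym ('a, 'n) ext = "complex ^ (('a \<times> 'n) set)"

definition lexless :: "('a::linorder \<times> 'n::linorder) \<Rightarrow> 'a \<times> 'n \<Rightarrow> bool" where
  "lexless q p \<longleftrightarrow> fst q < fst p \<or> (fst q = fst p \<and> snd q < snd p)"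

definition wsign :: "('a::linorder \<times> 'n::linorder) set \<Rightarrow> 'a \<times> 'n \<Rightarrow> complex" where
  "wsign S p = (-1) ^ card {q \<in> S. lexless q p}"

text \<open>left multiplication by x_p\<close>
definition xop :: "('a::{finite,linorder} \<times> 'n::{finite,linorder}) \<Rightarrow> ('a, 'n) ext \<Rightarrow> ('a, 'n) ext" where
  "xop p v = (\<chi> S. if p \<in> S then wsign S p * v $ (S - {p}) else 0)"

text \<open>the odd derivation d/dx_p with d_p(x_q) = delta_pq\<close>
definition dop :: "('a::{finite,linorder} \<times> 'n::{finite,linorder}) \<Rightarrow> ('a, 'n) ext \<Rightarrow> ('a, 'n) ext" where
  "dop p v = (\<chi> S. if p \<notin> S then wsign S p * v $ (insert p S) else 0)"

definition Omega :: "'n \<Rightarrow> 'n \<Rightarrow> ('a::{finite,linorder}, 'n::{finite,linorder}) ext \<Rightarrow> ('a, 'n) ext" where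
  "Omega i j v = (\<Sum>a\<in>UNIV. \<Sum>b\<in>UNIV. xop (a,i) (dop (b,i) (xop (b,j) (dop (a,j) v))))"

definition Eop :: "'n \<Rightarrow> 'n \<Rightarrow> ('a::{finite,linorder}, 'n::{finite,linorder}) ext \<Rightarrow> ('a, 'n) ext" where
  "Eop i j v = (\<Sum>a\<in>UNIV. xop (a,i) (dop (a,j) v))"

text \<open>gl_t action: E_ab \<mapsto> sum_i x_{a,i} d_{b,i}\<close>
definition Etop :: "'a \<Rightarrow> 'a \<Rightarrow> ('a::{finite,linorder}, 'n::{finite,linorder}) ext \<Rightarrow> ('a, 'n) ext" where
  "Etop a b v = (\<Sum>i\<in>UNIV. xop (a,i) (dop (b,i) v))"

definition kappa :: "'n \<Rightarrow> 'n \<Rightarrow> ('a::{finite,linorder}, 'n::{finite,linorder}) ext \<Rightarrow> ('a, 'n) ext" where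
  "kappa i j v = Eop i j (Eop j i v) + Eop j i (Eop i j v)"

definition Mwt :: "('a::{finite,linorder} \<Rightarrow> complex) \<Rightarrow> ('n::{finite,linorder} \<Rightarrow> complex) \<Rightarrow> ('a, 'n) ext set" where
  "Mwt \<alpha> \<beta> = {v. (\<forall>a. Etop a a v = \<alpha> a *s v) \<and> (\<forall>i. Eop i i v = \<beta> i *s v)}"

definition Uconf :: "(complex ^ 'n) set" where
  "Uconf = {z. \<forall>i j. i \<noteq> j \<longrightarrow> z $ i \<noteq> z $ j}"

definition holo_on :: "(complex ^ 'n) set \<Rightarrow> (complex ^ 'n \<Rightarrow> complex ^ 'k) \<Rightarrow> bool" where
  "holo_on D s \<longleftrightarrow> (\<forall>z\<in>D. \<exists>L. (s has_derivative L) (at z) \<and> (\<forall>c h. L (c *s h) = c *s L h))"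

text \<open>A connection d + sum_k omega_k(z) dz_k is given by its coefficients omega k z.
cov_deriv gives the dz_k-component of nabla s (for holomorphic s).\<close>
definition cov_deriv ::
  "('n \<Rightarrow> complex ^ 'n \<Rightarrow> complex ^ 'k \<Rightarrow> complex ^ 'k) \<Rightarrow> (complex ^ 'n \<Rightarrow> complex ^ 'k)
     \<Rightarrow> complex ^ 'n \<Rightarrow> 'n \<Rightarrow> complex ^ 'k" where
  "cov_deriv \<omega> s z k = frechet_derivative s (at z) (axis k 1) + \<omega> k z (s z)"

definition flat_on ::
  "(complex ^ 'n) set \<Rightarrow> ('n \<Rightarrow> complex ^ 'n \<Rightarrow> complex ^ 'k \<Rightarrow> complex ^ 'k) \<Rightarrow> (complex ^ 'n \<Rightarrow> complex ^ 'k) \<Rightarrow> bool" where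
  "flat_on D \<omega> s \<longleftrightarrow> (\<forall>z\<in>D. \<forall>k. cov_deriv \<omega> s z k = 0)"

text \<open>dz_k-coefficient of (dz_i - dz_j)/(z_i - z_j)\<close>
definition dlogc :: "'n \<Rightarrow> 'n \<Rightarrow> 'n \<Rightarrow> complex ^ 'n \<Rightarrow> complex" where
  "dlogc k i j z = ((if k = i then 1 else 0) - (if k = j then 1 else 0)) / (z $ i - z $ j)"

definition omegaKZ :: "complex \<Rightarrow> 'n::{finite,linorder} \<Rightarrow> complex ^ 'n::{finite,linorder} \<Rightarrow> ('a::{finite,linorder}, 'n::{finite,linorder}) ext \<Rightarrow> ('a::{finite,linorder}, 'n::{finite,linorder}) ext" where
  "omegaKZ \<h> k z v = - (\<h> *s (\<Sum>(i,j)\<in>{p. fst p < snd p}. dlogc k i j z *s Omega i j v))"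

definition omegaKappa :: "complex \<Rightarrow> 'n::{finite,linorder} \<Rightarrow> complex ^ 'n::{finite,linorder} \<Rightarrow> ('a::{finite,linorder}, 'n::{finite,linorder}) ext \<Rightarrow> ('a::{finite,linorder}, 'n::{finite,linorder}) ext" where
  "omegaKappa \<h> k z v = (\<h> / 2) *s (\<Sum>(i,j)\<in>{p. fst p < snd p}. dlogc k i j z *s kappa i j v)"

definition omegaDyn :: "complex \<Rightarrow> 'n::{finite,linorder} \<Rightarrow> complex ^ 'n::{finite,linorder} \<Rightarrow> ('a::{finite,linorder}, 'n::{finite,linorder}) ext \<Rightarrow> ('a::{finite,linorder}, 'n::{finite,linorder}) ext" where
  "omegaDyn \<h> k z v = \<h> *s (\<Sum>(i,j)\<in>{p. fst p < snd p}. dlogc k i j z *s Eop j i (Eop i j v))"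

end

theory Submission
  imports Defs
begin


lemma lexless_irrefl[simp]: "\<not> lexless p p" by (simp add: lexless_def)
lemma lexless_total: "p \<noteq> q \<Longrightarrow> lexless p q \<or> lexless q p"
  by (cases p; cases q) (auto simp: lexless_def)
lemma lexless_asym: "lexless p q \<Longrightarrow> \<not> lexless q p"
  by (auto simp: lexless_def)

lemma wsign_remove:
  fixes S :: "('a::{finite,linorder} \<times> 'n::{finite,linorder}) set"
  assumes "p \<in> S"
  shows "wsign S q = (if lexless p q then -1 else 1) * wsign (S - {p}) q"
proof (cases "lexless p q")
  case True
  have "{r \<in> S. lexless r q} = insert p {r \<in> S - {p}. lexless r q}" using assms True by auto
  then have "card {r \<in> S. lexless r q} = Suc (card {r \<in> S - {p}. lexless r q})" by simp
  then show ?thesis using True by (simp add: wsign_def)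
next
  case False
  have "{r \<in> S. lexless r q} = {r \<in> S - {p}. lexless r q}" using assms False by auto
  then show ?thesis using False by (simp add: wsign_def)
qed

lemma wsign_insert:
  fixes S :: "('a::{finite,linorder} \<times> 'n::{finite,linorder}) set"
  assumes "p \<notin> S"
  shows "wsign (insert p S) q = (if lexless p q then -1 else 1) * wsign S q"
  using wsign_remove[of p "insert p S" q] assms by simp

lemma wsign_sq: "wsign S p * wsign S p = 1"
  by (simp add: wsign_def flip: power_add)


lemma xd_same:
  fixes p :: "'a::{finite,linorder} \<times> 'n::{finite,linorder}"
  shows "xop p (dop p v) + dop p (xop p v) = v"
proof (subst vec_eq_iff, intro allI)
  fix S
  show "(xop p (dop p v) + dop p (xop p v)) $ S = v $ S"
  proof (cases "p \<in> S")
    case True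
    have "xop p (dop p v) $ S = wsign S p * (wsign (S - {p}) p * v $ S)"
      using True by (simp add: xop_def dop_def insert_absorb)
    moreover have "dop p (xop p v) $ S = 0" using True by (simp add: dop_def)
    moreover have "wsign (S - {p}) p = wsign S p" using wsign_remove[OF True, of p] by simp
    ultimately show ?thesis using wsign_sq[of S p] by (simp add: mult.assoc[symmetric])
  next
    case False
    have "dop p (xop p v) $ S = wsign S p * (wsign (insert p S) p * v $ S)"
      using False by (simp add: xop_def dop_def)
    moreover have "xop p (dop p v) $ S = 0" using False by (simp add: xop_def)
    moreover have "wsign (insert p S) p = wsign S p" using wsign_insert[OF False, of p] by simp
    ultimately show ?thesis using wsign_sq[of S p] by (simp add: mult.assoc[symmetric])
  qed
qed

lemma xd_diff:
  fixes p q :: "'a::{finite,linorder} \<times> 'n::{finite,linorder}"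
  assumes pq: "p \<noteq> q"
  shows "xop p (dop q v) + dop q (xop p v) = 0"
proof (subst vec_eq_iff, intro allI)
  fix S
  show "(xop p (dop q v) + dop q (xop p v)) $ S = 0 $ S"
  proof (cases "p \<in> S \<and> q \<notin> S")
    case True
    have e: "(if lexless p q then -1 else 1) * (if lexless q p then -1 else 1) = (-1::complex)"
      using lexless_total[OF pq] lexless_asym[of p q] lexless_asym[of q p] by auto
    have i: "insert q S - {p} = insert q (S - {p})" using pq by auto
    have "xop p (dop q v) $ S = wsign S p * (wsign (S - {p}) q * v $ (insert q (S - {p})))"
      using True by (simp add: xop_def dop_def)
    moreover have "dop q (xop p v) $ S = wsign S q * (wsign (insert q S) p * v $ (insert q (S - {p})))"
      using True i by (simp add: xop_def dop_def)
    moreover have "wsign S q = (if lexless p q then -1 else 1) * wsign (S - {p}) q"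
      using wsign_remove[of p S q] True by simp
    moreover have "wsign (insert q S) p = (if lexless q p then -1 else 1) * wsign S p"
      using wsign_insert[of q S p] True by simp
    ultimately have "(xop p (dop q v) + dop q (xop p v)) $ S
      = wsign S p * wsign (S - {p}) q * v $ (insert q (S - {p})) * (1 + (if lexless p q then -1 else 1) * (if lexless q p then -1 else 1))"
      by (simp add: algebra_simps)
    then show ?thesis using e by simp
  next
    case False
    then show ?thesis using pq by (auto simp: xop_def dop_def)
  qed
qed

lemma eps_prod: "p \<noteq> q \<Longrightarrow> (if lexless p q then -1 else 1) * (if lexless q p then -1 else 1) = (-1::complex)"
  using lexless_total[of p q] lexless_asym[of p q] lexless_asym[of q p] by auto

lemma xx_car:
  fixes p q :: "'a::{finite,linorder} \<times> 'n::{finite,linorder}"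
  assumes pq: "p \<noteq> q"
  shows "xop p (xop q v) = - xop q (xop p v)"
proof (subst vec_eq_iff, intro allI)
  fix S
  show "xop p (xop q v) $ S = (- xop q (xop p v)) $ S"
  proof (cases "p \<in> S \<and> q \<in> S")
    case True
    have i: "S - {q} - {p} = S - {p} - {q}" by auto
    have "xop p (xop q v) $ S = wsign S p * (wsign (S - {p}) q * v $ (S - {p} - {q}))"
      using True pq by (simp add: xop_def)
    moreover have "xop q (xop p v) $ S = wsign S q * (wsign (S - {q}) p * v $ (S - {p} - {q}))"
      using True pq i by (simp add: xop_def)
    moreover have "wsign S q = (if lexless p q then -1 else 1) * wsign (S - {p}) q"
      using wsign_remove[of p S q] True by simp
    moreover have "wsign S p = (if lexless q p then -1 else 1) * wsign (S - {q}) p"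
      using wsign_remove[of q S p] True by simp
    ultimately have "xop p (xop q v) $ S + xop q (xop p v) $ S
      = wsign (S - {q}) p * wsign (S - {p}) q * v $ (S - {p} - {q}) * ((if lexless q p then -1 else 1) + (if lexless p q then -1 else 1))"
      by (simp add: algebra_simps)
    also have "\<dots> = 0" using lexless_total[OF pq] lexless_asym[of p q] by auto
    finally show ?thesis by (simp add: eq_neg_iff_add_eq_0)
  next
    case False
    then show ?thesis using pq by (auto simp: xop_def)
  qed
qed

lemma dd_car:
  fixes p q :: "'a::{finite,linorder} \<times> 'n::{finite,linorder}"
  assumes pq: "p \<noteq> q"
  shows "dop p (dop q v) = - dop q (dop p v)"
proof (subst vec_eq_iff, intro allI)
  fix S
  show "dop p (dop q v) $ S = (- dop q (dop p v)) $ S"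
  proof (cases "p \<notin> S \<and> q \<notin> S")
    case True
    have i: "insert p (insert q S) = insert q (insert p S)" by auto
    have "dop p (dop q v) $ S = wsign S p * (wsign (insert p S) q * v $ (insert p (insert q S)))"
      using True pq by (simp add: dop_def insert_commute)
    moreover have "dop q (dop p v) $ S = wsign S q * (wsign (insert q S) p * v $ (insert p (insert q S)))"
      using True pq by (simp add: dop_def insert_commute)
    moreover have "wsign (insert p S) q = (if lexless p q then -1 else 1) * wsign S q"
      using wsign_insert[of p S q] True by simp
    moreover have "wsign (insert q S) p = (if lexless q p then -1 else 1) * wsign S p"
      using wsign_insert[of q S p] True by simp
    ultimately have "dop p (dop q v) $ S + dop q (dop p v) $ S
      = wsign S p * wsign S q * v $ (insert p (insert q S)) * ((if lexless q p then -1 else 1) + (if lexless p q then -1 else 1))"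
      by (simp add: algebra_simps)
    also have "\<dots> = 0" using lexless_total[OF pq] lexless_asym[of p q] by auto
    finally show ?thesis by (simp add: eq_neg_iff_add_eq_0)
  next
    case False
    then show ?thesis using pq by (auto simp: dop_def)
  qed
qed
lemma xop_add: "xop p (u + v) = xop p u + xop p v"
  by (simp add: vec_eq_iff xop_def algebra_simps)
lemma dop_add: "dop p (u + v) = dop p u + dop p v"
  by (simp add: vec_eq_iff dop_def algebra_simps)
lemma xop_diff: "xop p (u - v) = xop p u - xop p v"
  by (simp add: vec_eq_iff xop_def algebra_simps)
lemma dop_diff: "dop p (u - v) = dop p u - dop p v"
  by (simp add: vec_eq_iff dop_def algebra_simps)
lemma xop_neg: "xop p (- v) = - xop p v"
  by (simp add: vec_eq_iff xop_def)
lemma dop_neg: "dop p (- v) = - dop p v"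
  by (simp add: vec_eq_iff dop_def)
lemma xop_zero: "xop p 0 = 0"
  by (simp add: vec_eq_iff xop_def)
lemma dop_zero: "dop p 0 = 0"
  by (simp add: vec_eq_iff dop_def)
lemma xop_smult: "xop p (c *s v) = c *s xop p v"
  by (simp add: vec_eq_iff xop_def algebra_simps)
lemma dop_smult: "dop p (c *s v) = c *s dop p v"
  by (simp add: vec_eq_iff dop_def algebra_simps)
lemma xop_sum: "xop p (sum f A) = (\<Sum>a\<in>A. xop p (f a))"
  by (simp add: vec_eq_iff xop_def sum_component sum_distrib_left)
lemma dop_sum: "dop p (sum f A) = (\<Sum>a\<in>A. dop p (f a))"
  by (simp add: vec_eq_iff dop_def sum_component sum_distrib_left)

lemmas xd_lin = xop_add dop_add xop_diff dop_diff xop_neg dop_neg xop_zero dop_zero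
  xop_smult dop_smult xop_sum dop_sum

lemma Eop_add: "Eop i j (u + v) = Eop i j u + Eop i j v"
  by (simp add: Eop_def xd_lin sum.distrib)
lemma Eop_diff: "Eop i j (u - v) = Eop i j u - Eop i j v"
  by (simp add: Eop_def xd_lin sum_subtractf)
lemma Eop_smult: "Eop i j (c *s v) = c *s Eop i j v"
  by (simp add: Eop_def xd_lin sum_cmul)
lemma Eop_sum: "Eop i j (sum f A) = (\<Sum>a\<in>A. Eop i j (f a))"
  by (simp add: Eop_def xd_lin) (rule sum.swap)



lemma xd_same': "xop p (dop p v) = v - dop p (xop p v)"
  using xd_same[of p v] by (simp add: eq_diff_eq)
lemma xd_diff': "p \<noteq> q \<Longrightarrow> xop p (dop q v) = - dop q (xop p v)"
  using xd_diff[of p q v] by (simp add: eq_neg_iff_add_eq_0)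

lemma Omega_eq:
  fixes i j :: "'n::{finite,linorder}"
  assumes ij: "i \<noteq> j"
  shows "Omega i j (v :: ('a::{finite,linorder}, 'n) ext) = Eop i i v - Eop i j (Eop j i v)"
proof -
  have pt_same: "xop (a,i) (dop (a,i) (xop (a,j) (dop (a,j) v)))
     = xop (a,i) (dop (a,i) v) - xop (a,i) (dop (a,j) (xop (a,j) (dop (a,i) v)))" for a :: 'a
  proof -
    have h1: "xop (a,j) (dop (a,j) v) = v - dop (a,j) (xop (a,j) v)"
      by (rule xd_same')
    have h2: "dop (a,i) (dop (a,j) w) = - dop (a,j) (dop (a,i) w)" for w
      by (rule dd_car) (use ij in simp)
    have h3: "dop (a,i) (xop (a,j) v) = - xop (a,j) (dop (a,i) v)"
      using ij xd_diff[of "(a,j)" "(a,i)" v] by (simp add: eq_neg_iff_add_eq_0 add.commute)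
    show ?thesis
      by (simp add: h1 h2 h3 xd_lin)
  qed
  have pt_diff: "xop (a,i) (dop (b,i) (xop (b,j) (dop (a,j) v)))
     = - xop (a,i) (dop (a,j) (xop (b,j) (dop (b,i) v)))" if ab: "a \<noteq> b" for a b :: 'a
  proof -
    have h1: "xop (b,j) (dop (a,j) v) = - dop (a,j) (xop (b,j) v)"
      by (rule xd_diff') (use ab in simp)
    have h2: "dop (b,i) (dop (a,j) w) = - dop (a,j) (dop (b,i) w)" for w
      by (rule dd_car) (use ij in simp)
    have h3: "dop (b,i) (xop (b,j) v) = - xop (b,j) (dop (b,i) v)"
      using ij xd_diff[of "(b,j)" "(b,i)" v] by (simp add: eq_neg_iff_add_eq_0 add.commute)
    show ?thesis
      by (simp add: h1 h2 h3 xd_lin)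
  qed
  have pt: "xop (a,i) (dop (b,i) (xop (b,j) (dop (a,j) v)))
     = (if a = b then xop (a,i) (dop (a,i) v) else 0) - xop (a,i) (dop (a,j) (xop (b,j) (dop (b,i) v)))"
    for a b :: 'a
    using pt_same[of a] pt_diff[of a b] by (cases "a = b") simp_all
  have "Omega i j v = (\<Sum>a\<in>UNIV. \<Sum>b\<in>UNIV. (if a = b then xop (a,i) (dop (a,i) v) else 0) - xop (a,i) (dop (a,j) (xop (b,j) (dop (b,i) v))))"
    unfolding Omega_def using pt by simp
  also have "\<dots> = Eop i i v - Eop i j (Eop j i v)"
    by (simp add: sum_subtractf Eop_def xd_lin)
  finally show ?thesis .
qed

lemma comm_E:
  fixes i j :: "'n::{finite,linorder}"
  assumes ij: "i \<noteq> j"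
  shows "Eop i j (Eop j i (v :: ('a::{finite,linorder}, 'n) ext)) - Eop j i (Eop i j v) = Eop i i v - Eop j j v"
proof -
  have pt: "xop (a,k) (dop (a,l) (xop (b,l) (dop (b,k) v)))
     = (if a = b then xop (a,k) (dop (a,k) v) else 0) - xop (a,k) (xop (b,l) (dop (a,l) (dop (b,k) v)))"
    if kl: "k \<noteq> l" for a b :: 'a and k l :: 'n
  proof -
    have g: "dop (a,l) (xop (b,l) w) = (if a = b then w else 0) - xop (b,l) (dop (a,l) w)" for w
    proof (cases "a = b")
      case True
      then show ?thesis using xd_same[of "(a,l)" w] by (simp add: algebra_simps)
    next
      case False
      then show ?thesis using xd_diff[of "(b,l)" "(a,l)" w] by (simp add: algebra_simps eq_neg_iff_add_eq_0)
    qed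
    show ?thesis unfolding g by (cases "a = b") (simp_all add: xd_lin)
  qed
  have sw: "xop (b,j) (xop (a,i) (dop (b,i) (dop (a,j) v))) = xop (a,i) (xop (b,j) (dop (a,j) (dop (b,i) v)))"
    for a b :: 'a
  proof -
    have s1: "xop (b,j) (xop (a,i) u) = - xop (a,i) (xop (b,j) u)" for u
      by (rule xx_car) (use ij in simp)
    have s2: "dop (b,i) (dop (a,j) v) = - dop (a,j) (dop (b,i) v)"
      by (rule dd_car) (use ij in simp)
    show ?thesis by (simp add: s1 s2 xd_lin)
  qed
  have e1: "Eop i j (Eop j i v) = Eop i i v - (\<Sum>a\<in>UNIV. \<Sum>b\<in>UNIV. xop (a,i) (xop (b,j) (dop (a,j) (dop (b,i) v))))"
    unfolding Eop_def using pt[OF ij] by (simp add: xd_lin sum_subtractf)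
  have e2: "Eop j i (Eop i j v) = Eop j j v - (\<Sum>a\<in>UNIV. \<Sum>b\<in>UNIV. xop (a,j) (xop (b,i) (dop (a,i) (dop (b,j) v))))"
    unfolding Eop_def using pt[of j i] ij by (simp add: xd_lin sum_subtractf)
  have "(\<Sum>a\<in>UNIV. \<Sum>b\<in>UNIV. xop (a,j) (xop (b,i) (dop (a,i) (dop (b,j) v))))
      = (\<Sum>b\<in>UNIV. \<Sum>a\<in>UNIV. xop (a,j) (xop (b,i) (dop (a,i) (dop (b,j) v))))"
    by (rule sum.swap)
  also have "\<dots> = (\<Sum>a\<in>UNIV. \<Sum>b\<in>UNIV. xop (a,i) (xop (b,j) (dop (a,j) (dop (b,i) v))))"
    using sw by simp
  finally show ?thesis using e1 e2 by simp
qed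

lemma two_smult: "(2::complex) *s w = w + w"
  by (simp add: vec_eq_iff)

lemma Omega_kappa:
  assumes "i \<noteq> j"
  shows "Omega i j v + Omega i j v = (Eop i i v + Eop j j v) - kappa i j v"
proof -
  have a: "Omega i j v $ S = Eop i i v $ S - Eop i j (Eop j i v) $ S" for S
    using Omega_eq[OF assms, of v] by simp
  have b: "Eop j i (Eop i j v) $ S = Eop i j (Eop j i v) $ S - Eop i i v $ S + Eop j j v $ S" for S
    using arg_cong[OF comm_E[OF assms, of v], of "\<lambda>x. x $ S"] by (simp add: algebra_simps)
  show ?thesis unfolding kappa_def by (simp add: vec_eq_iff a b algebra_simps)
qed

lemma kappa_dyn:
  assumes "i \<noteq> j"
  shows "kappa i j v - (Eop i i v - Eop j j v) = Eop j i (Eop i j v) + Eop j i (Eop i j v)"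
proof -
  have b: "Eop i j (Eop j i v) $ S = Eop j i (Eop i j v) $ S + Eop i i v $ S - Eop j j v $ S" for S
    using arg_cong[OF comm_E[OF assms, of v], of "\<lambda>x. x $ S"] by (simp add: algebra_simps)
  show ?thesis unfolding kappa_def by (simp add: vec_eq_iff b algebra_simps)
qed

lemma kappa_smult: "kappa i j (c *s v) = c *s kappa i j v"
  by (simp add: kappa_def Eop_smult vector_add_ldistrib)



lemma norm_smult_vec: "norm (c *s (v::complex^'k)) = norm c * norm v"
  unfolding norm_vec_def by (simp add: norm_mult L2_set_right_distrib)

lemma smult_bilinear: "bounded_bilinear (\<lambda>(c::complex) (v::complex^'k). c *s v)"
proof
  fix a a' :: complex and b b' :: "complex^'k" and r :: real
  show "(a + a') *s b = a *s b + a' *s b" by (rule vector_sadd_rdistrib)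
  show "a *s (b + b') = a *s b + a *s b'" by (rule vector_add_ldistrib)
  show "(r *\<^sub>R a) *s b = r *\<^sub>R (a *s b)"
    by (rule vec_eq_iff[THEN iffD2], rule allI)
      (simp only: vector_smult_component vector_scaleR_component mult_scaleR_left)
  show "a *s (r *\<^sub>R b) = r *\<^sub>R (a *s b)"
    by (rule vec_eq_iff[THEN iffD2], rule allI)
      (simp only: vector_smult_component vector_scaleR_component mult_scaleR_right)
next
  show "\<exists>K. \<forall>(a::complex) (b::complex^'k). norm (a *s b) \<le> norm a * norm b * K"
    by (rule exI[of _ 1]) (simp add: norm_smult_vec)
qed

lemma smult_deriv:
  fixes \<phi> :: "complex^'n \<Rightarrow> complex" and s :: "complex^'n \<Rightarrow> complex^'k"
  assumes "(\<phi> has_derivative \<phi>') (at z)" "(s has_derivative s') (at z)"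
  shows "((\<lambda>w. \<phi> w *s s w) has_derivative (\<lambda>h. \<phi> z *s s' h + \<phi>' h *s s z)) (at z)"
  using bounded_bilinear.FDERIV[OF smult_bilinear assms] by simp

lemma exp_sum_deriv:
  fixes Lp :: "'p \<Rightarrow> complex^'n \<Rightarrow> complex"
  assumes "finite P" "\<And>p. p \<in> P \<Longrightarrow> (Lp p has_derivative Lp' p) (at z)"
  shows "((\<lambda>w. exp (\<Sum>p\<in>P. \<gamma> p * Lp p w)) has_derivative
          (\<lambda>h. exp (\<Sum>p\<in>P. \<gamma> p * Lp p z) * (\<Sum>p\<in>P. \<gamma> p * Lp' p h))) (at z)"
proof -
  have inner: "((\<lambda>w. \<Sum>p\<in>P. \<gamma> p * Lp p w) has_derivative (\<lambda>h. \<Sum>p\<in>P. \<gamma> p * Lp' p h)) (at z)"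
    by (intro has_derivative_sum has_derivative_mult_right assms(2))
  have "(exp has_derivative (*) (exp (\<Sum>p\<in>P. \<gamma> p * Lp p z))) (at (\<Sum>p\<in>P. \<gamma> p * Lp p z))"
    using DERIV_exp unfolding has_field_derivative_def by blast
  from has_derivative_compose[OF inner this] show ?thesis by simp
qed

lemma log_deriv:
  fixes Lf :: "complex^'n \<Rightarrow> complex"
  assumes D: "open D" "z \<in> D" and cont: "continuous_on D Lf"
    and ex: "\<forall>w\<in>D. exp (Lf w) = w$i - w$j" and nz: "z$i \<noteq> z$j"
  shows "(Lf has_derivative (\<lambda>h. (h$i - h$j) / (z$i - z$j))) (at z)"
proof -
  define u0 where "u0 = z$i - z$j"
  have u0: "u0 \<noteq> 0" using nz by (simp add: u0_def)
  define G where "G w = Lf z + Ln ((w$i - w$j) / u0)" for w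
  have du: "((\<lambda>w. (w$i - w$j) / u0) has_derivative (\<lambda>h. (h$i - h$j) / u0)) (at z)"
  proof -
    have di: "((\<lambda>w. w$k) has_derivative (\<lambda>h. h$k)) (at z)" for k
      by (rule bounded_linear_imp_has_derivative[OF bounded_linear_vec_nth])
    have "((\<lambda>w. (w$i - w$j) * inverse u0) has_derivative (\<lambda>h. (h$i - h$j) * inverse u0)) (at z)"
      by (intro has_derivative_mult_left has_derivative_diff di)
    then show ?thesis by (simp add: divide_inverse)
  qed
  have z1: "(z$i - z$j) / u0 = 1" using u0 by (simp add: u0_def)
  have dLn: "(Ln has_derivative (*) (inverse 1)) (at ((z$i - z$j) / u0))"
    unfolding z1 using has_field_derivative_Ln[of 1] by (simp add: has_field_derivative_def)
  have dG: "(G has_derivative (\<lambda>h. (h$i - h$j) / u0)) (at z)"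
    unfolding G_def
    using has_derivative_add[OF has_derivative_const has_derivative_compose[OF du dLn]] by simp
  have cG: "isCont G z" using has_derivative_continuous[OF dG] .
  have cL: "isCont Lf z" using cont D continuous_on_eq_continuous_at by blast
  have cH: "isCont (\<lambda>w. Lf w - G w) z" using cG cL by (intro continuous_intros)
  have Hz: "Lf z - G z = 0" by (simp add: G_def z1)
  obtain d where d: "d > 0" "\<And>w. dist w z < d \<Longrightarrow> dist (Lf w - G w) (Lf z - G z) < 2 * pi"
    using cH unfolding continuous_at_eps_delta by (metis pi_gt_zero mult_pos_pos zero_less_numeral)
  define S where "S = ball z d \<inter> D"
  have S: "open S" "z \<in> S" using D d by (auto simp: S_def)
  have eq: "G w = Lf w" if w: "w \<in> S" for w
  proof -
    have wD: "w \<in> D" and wd: "dist w z < d" using w by (auto simp: S_def dist_commute)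
    have uw: "w$i - w$j \<noteq> 0" using ex wD by (metis exp_not_eq_zero)
    have "exp (G w) = exp (Lf z) * ((w$i - w$j) / u0)"
      using uw u0 by (simp add: G_def exp_add)
    also have "\<dots> = w$i - w$j" using ex D u0 by (simp add: u0_def)
    finally have "exp (Lf w) = exp (G w)" using ex wD by simp
    then obtain n :: int where n: "Lf w = G w + (of_int (2 * n) * pi) * \<i>"
      using exp_eq by blast
    have "norm (Lf w - G w) < 2 * pi" using d(2)[OF wd] Hz by (simp add: dist_norm)
    then have "norm ((of_int (2 * n) * pi) * \<i>) < 2 * pi" using n by simp
    then have "\<bar>2 * n\<bar> * pi < 2 * pi"
      by (simp add: norm_mult norm_of_int)
    then have "\<bar>2 * real_of_int n\<bar> < 2" by simp
    then have "n = 0" by linarith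
    then show ?thesis using n by simp
  qed
  show ?thesis unfolding u0_def[symmetric]
    by (rule has_derivative_transform_within_open[OF dG S]) (use eq in auto)
qed



lemma alg1:
  fixes \<Phi> fe v hb :: complex and c b K Om \<gamma> :: "'p \<Rightarrow> complex"
  assumes "\<forall>p\<in>P. Om p + Om p = b p * v - K p" "\<forall>p\<in>P. \<gamma> p = - b p * hb / 2"
  shows "\<Phi> * fe + (\<Phi> * (\<Sum>p\<in>P. \<gamma> p * c p)) * v + hb / 2 * (\<Sum>p\<in>P. c p * (\<Phi> * K p))
       = \<Phi> * (fe - hb * (\<Sum>p\<in>P. c p * Om p))"
proof -
  have "(\<Phi> * (\<Sum>p\<in>P. \<gamma> p * c p)) * v + hb / 2 * (\<Sum>p\<in>P. c p * (\<Phi> * K p))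
      = (\<Sum>p\<in>P. \<Phi> * (\<gamma> p * c p) * v + hb / 2 * (c p * (\<Phi> * K p)))"
    by (simp add: sum.distrib sum_distrib_left sum_distrib_right)
  also have "\<dots> = (\<Sum>p\<in>P. - (\<Phi> * hb * (c p * Om p)))"
  proof (rule sum.cong)
    fix p assume p: "p \<in> P"
    have K: "K p = b p * v - 2 * Om p" using assms(1) p by (simp add: algebra_simps)
    have g: "\<gamma> p = - b p * hb / 2" using assms(2) p by simp
    show "\<Phi> * (\<gamma> p * c p) * v + hb / 2 * (c p * (\<Phi> * K p)) = - (\<Phi> * hb * (c p * Om p))"
      unfolding K g by (simp add: field_simps)
  qed simp
  also have "\<dots> = - (\<Phi> * hb * (\<Sum>p\<in>P. c p * Om p))"
    by (simp add: sum_negf sum_distrib_left)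
  finally show ?thesis by (simp add: algebra_simps)
qed

lemma alg2:
  fixes hz iz se v hb :: complex and c b K Dv \<gamma> :: "'p \<Rightarrow> complex"
  assumes hi: "hz * iz = 1"
    and "\<forall>p\<in>P. K p - b p * v = Dv p + Dv p" "\<forall>p\<in>P. \<gamma> p = - (hb / 2 * b p)"
  shows "hz * (iz * se + (iz * (\<Sum>p\<in>P. \<gamma> p * c p)) * v + hb / 2 * (\<Sum>p\<in>P. c p * (iz * K p)))
       = se + hb * (\<Sum>p\<in>P. c p * Dv p)"
proof -
  have "hz * (iz * se + (iz * (\<Sum>p\<in>P. \<gamma> p * c p)) * v + hb / 2 * (\<Sum>p\<in>P. c p * (iz * K p)))
     = (hz * iz) * (se + (\<Sum>p\<in>P. \<gamma> p * c p * v + hb / 2 * (c p * K p)))"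
    by (simp add: algebra_simps sum.distrib sum_distrib_left sum_distrib_right)
  also have "(\<Sum>p\<in>P. \<gamma> p * c p * v + hb / 2 * (c p * K p)) = (\<Sum>p\<in>P. hb * (c p * Dv p))"
  proof (rule sum.cong)
    fix p assume p: "p \<in> P"
    have K: "K p = b p * v + 2 * Dv p" using assms(2) p by (simp add: algebra_simps)
    show "\<gamma> p * c p * v + hb / 2 * (c p * K p) = hb * (c p * Dv p)"
    proof -
      have g: "\<gamma> p = - (hb / 2 * b p)" using assms(3) p by simp
      show ?thesis unfolding K g by (simp add: field_simps)
    qed
  qed simp
  finally show ?thesis using hi by (simp add: sum_distrib_left)
qed


theorem theorem3p3:
  fixes m n :: nat
    and \<alpha> :: "'a::{finite,linorder} \<Rightarrow> complex"
    and \<beta> :: "'n::{finite,linorder} \<Rightarrow> complex"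
    and \<h> :: complex
    and D :: "(complex ^ 'n::{finite,linorder}) set"
    and L :: "'n \<Rightarrow> 'n \<Rightarrow> complex ^ 'n::{finite,linorder} \<Rightarrow> complex"
    and f :: "complex ^ 'n::{finite,linorder} \<Rightarrow> ('a::{finite,linorder}, 'n::{finite,linorder}) ext"
  assumes "0 < m" and "0 < n" and "CARD('n) = m + n"
    and "open D" and "D \<subseteq> Uconf"
    and "\<And>i j. i < j \<Longrightarrow> continuous_on D (L i j) \<and> (\<forall>z\<in>D. exp (L i j z) = z $ i - z $ j)"
    and "holo_on D f" and "\<forall>z\<in>D. f z \<in> Mwt \<alpha> \<beta>"
  shows "(flat_on D (omegaKZ \<h>) f \<longleftrightarrow>
            flat_on D (omegaKappa \<h>)
              (\<lambda>z. (\<Prod>(i,j)\<in>{p. fst p < snd p}. exp (- (\<beta> i + \<beta> j) * \<h> / 2 * L i j z)) *s f z))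
      \<and> (\<forall>s. holo_on D s \<longrightarrow> (\<forall>z\<in>D. s z \<in> Mwt \<alpha> \<beta>) \<longrightarrow>
           (\<forall>z\<in>D. \<forall>k.
              (let hh = (\<lambda>w. exp (\<h> / 2 * (\<Sum>(i,j)\<in>{p. fst p < snd p}. (\<beta> i - \<beta> j) * L i j w)))
               in hh z *s cov_deriv (omegaKappa \<h>) (\<lambda>w. inverse (hh w) *s s w) z k)
              = cov_deriv (omegaDyn \<h>) s z k))"
proof -
  define P where "P = {p::'n\<times>'n. fst p < snd p}"
  have finP: "finite P" by simp
  have Ld: "(L i j has_derivative (\<lambda>h. (h$i - h$j) / (z$i - z$j))) (at z)"
    if "z \<in> D" "i < j" for z i j
  proof (rule log_deriv[OF assms(4) that(1)])
    show "continuous_on D (L i j)" "\<forall>w\<in>D. exp (L i j w) = w $ i - w $ j"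
      using assms(6)[OF that(2)] by auto
    show "z $ i \<noteq> z $ j" using assms(5) that by (auto simp: Uconf_def)
  qed
  have dl: "(axis k 1 $ i - axis k 1 $ j) / (z$i - z$j) = dlogc k i j z" for k i j and z :: "complex^'n::{finite,linorder}"
    by (auto simp: axis_def dlogc_def)
  have Ed: "((\<lambda>w. exp (\<Sum>p\<in>P. \<gamma> p * L (fst p) (snd p) w)) has_derivative
       (\<lambda>h. exp (\<Sum>p\<in>P. \<gamma> p * L (fst p) (snd p) z) * (\<Sum>p\<in>P. \<gamma> p * ((h$fst p - h$snd p) / (z$fst p - z$snd p))))) (at z)"
    if "z \<in> D" for z \<gamma>
    by (rule exp_sum_deriv[OF finP]) (use Ld that in \<open>auto simp: P_def\<close>)
  have holo: "\<exists>s'. (s has_derivative s') (at z)" if "holo_on D s" "z \<in> D" for s :: "complex^'n::{finite,linorder} \<Rightarrow> ('a::{finite,linorder},'n) ext" and z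
    using that unfolding holo_on_def by blast
  have sumc: "(\<Sum>(i,j)\<in>P. F i j) $ S = (\<Sum>p\<in>P. F (fst p) (snd p) $ S)" for F :: "'n::{finite,linorder} \<Rightarrow> 'n \<Rightarrow> ('a::{finite,linorder},'n) ext" and S
    by (simp add: case_prod_unfold)
  define \<gamma>1 where "\<gamma>1 = (\<lambda>p. - (\<beta> (fst p) + \<beta> (snd p)) * \<h> / 2)"
  define \<Phi> where "\<Phi> = (\<lambda>w. exp (\<Sum>p\<in>P. \<gamma>1 p * L (fst p) (snd p) w))"
  have gPhi: "(\<lambda>z. (\<Prod>(i,j)\<in>P. exp (- (\<beta> i + \<beta> j) * \<h> / 2 * L i j z)) *s f z) = (\<lambda>w. \<Phi> w *s f w)"
    by (rule ext) (simp add: \<Phi>_def \<gamma>1_def exp_sum[OF finP] case_prod_unfold)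
  have key1: "cov_deriv (omegaKappa \<h>) (\<lambda>w. \<Phi> w *s f w) z k = \<Phi> z *s cov_deriv (omegaKZ \<h>) f z k"
    if z: "z \<in> D" for z k
  proof -
    obtain f' where f': "(f has_derivative f') (at z)" using holo[OF assms(7) z] by blast
    define \<Phi>' where "\<Phi>' = (\<lambda>h. \<Phi> z * (\<Sum>p\<in>P. \<gamma>1 p * ((h$fst p - h$snd p) / (z$fst p - z$snd p))))"
    have dPhi: "(\<Phi> has_derivative \<Phi>') (at z)" unfolding \<Phi>_def \<Phi>'_def using Ed[OF z] .
    have dg: "((\<lambda>w. \<Phi> w *s f w) has_derivative (\<lambda>h. \<Phi> z *s f' h + \<Phi>' h *s f z)) (at z)"
      by (rule smult_deriv[OF dPhi f'])
    have fd1: "frechet_derivative (\<lambda>w. \<Phi> w *s f w) (at z) = (\<lambda>h. \<Phi> z *s f' h + \<Phi>' h *s f z)"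
      using frechet_derivative_at[OF dg] by simp
    have fd2: "frechet_derivative f (at z) = f'" using frechet_derivative_at[OF f'] by simp
    have v: "f z \<in> Mwt \<alpha> \<beta>" using assms(8) z by blast
    have Eii: "Eop i i (f z) = \<beta> i *s f z" for i using v by (simp add: Mwt_def)
    have Om: "Omega i j (f z) $ S + Omega i j (f z) $ S = (\<beta> i + \<beta> j) * f z $ S - kappa i j (f z) $ S"
      if "i < j" for i j S
      using arg_cong[OF Omega_kappa[of i j "f z"], of "\<lambda>x. x $ S"] that by (simp add: Eii algebra_simps)
    have Phie: "\<Phi>' (axis k 1) = \<Phi> z * (\<Sum>p\<in>P. \<gamma>1 p * dlogc k (fst p) (snd p) z)"
      unfolding \<Phi>'_def dl ..
    show ?thesis
    proof (subst vec_eq_iff, intro allI)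
      fix S
      have c1: "cov_deriv (omegaKappa \<h>) (\<lambda>w. \<Phi> w *s f w) z k $ S
        = \<Phi> z * f' (axis k 1) $ S + (\<Phi> z * (\<Sum>p\<in>P. \<gamma>1 p * dlogc k (fst p) (snd p) z)) * f z $ S
          + \<h> / 2 * (\<Sum>p\<in>P. dlogc k (fst p) (snd p) z * (\<Phi> z * kappa (fst p) (snd p) (f z) $ S))"
        unfolding cov_deriv_def fd1 omegaKappa_def P_def[symmetric] Phie
        by (simp add: case_prod_unfold kappa_smult mult.assoc)
      have c2: "(\<Phi> z *s cov_deriv (omegaKZ \<h>) f z k) $ S
        = \<Phi> z * (f' (axis k 1) $ S - \<h> * (\<Sum>p\<in>P. dlogc k (fst p) (snd p) z * Omega (fst p) (snd p) (f z) $ S))"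
        unfolding cov_deriv_def fd2 omegaKZ_def P_def[symmetric]
        by (simp add: case_prod_unfold right_diff_distrib mult.assoc)
      have a1: "\<forall>p\<in>P. Omega (fst p) (snd p) (f z) $ S + Omega (fst p) (snd p) (f z) $ S
          = (\<beta> (fst p) + \<beta> (snd p)) * f z $ S - kappa (fst p) (snd p) (f z) $ S"
        using Om by (auto simp: P_def)
      have a2: "\<forall>p\<in>P. \<gamma>1 p = - (\<beta> (fst p) + \<beta> (snd p)) * \<h> / 2"
        by (simp add: \<gamma>1_def)
      show "cov_deriv (omegaKappa \<h>) (\<lambda>w. \<Phi> w *s f w) z k $ S = (\<Phi> z *s cov_deriv (omegaKZ \<h>) f z k) $ S"
        unfolding c1 c2 by (rule alg1[OF a1 a2])
    qed
  qed
  have Phinz: "\<Phi> w \<noteq> 0" for w by (simp add: \<Phi>_def)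
  have part1: "flat_on D (omegaKZ \<h>) f \<longleftrightarrow> flat_on D (omegaKappa \<h>) (\<lambda>w. \<Phi> w *s f w)"
    unfolding flat_on_def using key1 Phinz by simp
  define \<gamma>2 where "\<gamma>2 = (\<lambda>p. - (\<h> / 2 * (\<beta> (fst p) - \<beta> (snd p))))"
  define \<Psi> where "\<Psi> = (\<lambda>w. exp (\<Sum>p\<in>P. \<gamma>2 p * L (fst p) (snd p) w))"
  define hh where "hh = (\<lambda>w. exp (\<h> / 2 * (\<Sum>(i,j)\<in>P. (\<beta> i - \<beta> j) * L i j w)))"
  have invh: "inverse (hh w) = \<Psi> w" for w
  proof -
    have eq: "- (\<h> / 2 * (\<Sum>(i,j)\<in>P. (\<beta> i - \<beta> j) * L i j w)) = (\<Sum>p\<in>P. \<gamma>2 p * L (fst p) (snd p) w)"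
      by (simp add: \<gamma>2_def case_prod_unfold sum_distrib_left sum_negf mult.assoc)
    show ?thesis unfolding hh_def \<Psi>_def eq[symmetric] by (simp only: exp_minus)
  qed
  have hhPsi: "hh w * \<Psi> w = 1" for w
    unfolding invh[symmetric] by (simp add: hh_def)
  have key2: "hh z *s cov_deriv (omegaKappa \<h>) (\<lambda>w. \<Psi> w *s s w) z k = cov_deriv (omegaDyn \<h>) s z k"
    if z: "z \<in> D" and hs: "holo_on D s" and ws: "\<forall>z\<in>D. s z \<in> Mwt \<alpha> \<beta>"
    for z k and s :: "complex^'n::{finite,linorder} \<Rightarrow> ('a::{finite,linorder},'n) ext"
  proof -
    obtain s' where s': "(s has_derivative s') (at z)" using holo[OF hs z] by blast
    define \<Psi>' where "\<Psi>' = (\<lambda>h. \<Psi> z * (\<Sum>p\<in>P. \<gamma>2 p * ((h$fst p - h$snd p) / (z$fst p - z$snd p))))"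
    have dPsi: "(\<Psi> has_derivative \<Psi>') (at z)" unfolding \<Psi>_def \<Psi>'_def using Ed[OF z] .
    have dg: "((\<lambda>w. \<Psi> w *s s w) has_derivative (\<lambda>h. \<Psi> z *s s' h + \<Psi>' h *s s z)) (at z)"
      by (rule smult_deriv[OF dPsi s'])
    have fd1: "frechet_derivative (\<lambda>w. \<Psi> w *s s w) (at z) = (\<lambda>h. \<Psi> z *s s' h + \<Psi>' h *s s z)"
      using frechet_derivative_at[OF dg] by simp
    have fd2: "frechet_derivative s (at z) = s'" using frechet_derivative_at[OF s'] by simp
    have v: "s z \<in> Mwt \<alpha> \<beta>" using ws z by blast
    have Eii: "Eop i i (s z) = \<beta> i *s s z" for i using v by (simp add: Mwt_def)
    have Kd: "kappa i j (s z) $ S - (\<beta> i - \<beta> j) * s z $ S = Eop j i (Eop i j (s z)) $ S + Eop j i (Eop i j (s z)) $ S"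
      if "i < j" for i j S
      using arg_cong[OF kappa_dyn[of i j "s z"], of "\<lambda>x. x $ S"] that by (simp add: Eii algebra_simps)
    have Psie: "\<Psi>' (axis k 1) = \<Psi> z * (\<Sum>p\<in>P. \<gamma>2 p * dlogc k (fst p) (snd p) z)"
      unfolding \<Psi>'_def dl ..
    show ?thesis
    proof (subst vec_eq_iff, intro allI)
      fix S
      have c1: "cov_deriv (omegaKappa \<h>) (\<lambda>w. \<Psi> w *s s w) z k $ S
        = \<Psi> z * s' (axis k 1) $ S + (\<Psi> z * (\<Sum>p\<in>P. \<gamma>2 p * dlogc k (fst p) (snd p) z)) * s z $ S
          + \<h> / 2 * (\<Sum>p\<in>P. dlogc k (fst p) (snd p) z * (\<Psi> z * kappa (fst p) (snd p) (s z) $ S))"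
        unfolding cov_deriv_def fd1 omegaKappa_def P_def[symmetric] Psie
        by (simp add: case_prod_unfold kappa_smult mult.assoc)
      have c2: "cov_deriv (omegaDyn \<h>) s z k $ S
        = s' (axis k 1) $ S + \<h> * (\<Sum>p\<in>P. dlogc k (fst p) (snd p) z * Eop (snd p) (fst p) (Eop (fst p) (snd p) (s z)) $ S)"
        unfolding cov_deriv_def fd2 omegaDyn_def P_def[symmetric]
        by (simp add: case_prod_unfold)
      have a1: "\<forall>p\<in>P. kappa (fst p) (snd p) (s z) $ S - (\<beta> (fst p) - \<beta> (snd p)) * s z $ S
          = Eop (snd p) (fst p) (Eop (fst p) (snd p) (s z)) $ S + Eop (snd p) (fst p) (Eop (fst p) (snd p) (s z)) $ S"
        using Kd by (auto simp: P_def)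
      have a2: "\<forall>p\<in>P. \<gamma>2 p = - (\<h> / 2 * (\<beta> (fst p) - \<beta> (snd p)))"
        by (simp add: \<gamma>2_def)
      show "(hh z *s cov_deriv (omegaKappa \<h>) (\<lambda>w. \<Psi> w *s s w) z k) $ S = cov_deriv (omegaDyn \<h>) s z k $ S"
        unfolding vector_smult_component c1 c2 by (rule alg2[OF hhPsi a1 a2])
    qed
  qed
  show ?thesis
  proof (intro conjI allI impI ballI)
    show "flat_on D (omegaKZ \<h>) f \<longleftrightarrow>
            flat_on D (omegaKappa \<h>)
              (\<lambda>z. (\<Prod>(i,j)\<in>{p. fst p < snd p}. exp (- (\<beta> i + \<beta> j) * \<h> / 2 * L i j z)) *s f z)"
      unfolding P_def[symmetric] gPhi by (rule part1)
  next
    fix s z k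
    assume hs: "holo_on D s" and ws: "\<forall>z\<in>D. s z \<in> Mwt \<alpha> \<beta>" and z: "z \<in> D"
    have e: "(\<lambda>w. inverse (hh w) *s s w) = (\<lambda>w. \<Psi> w *s s w)" using invh by simp
    show "(let hh = (\<lambda>w. exp (\<h> / 2 * (\<Sum>(i,j)\<in>{p. fst p < snd p}. (\<beta> i - \<beta> j) * L i j w)))
               in hh z *s cov_deriv (omegaKappa \<h>) (\<lambda>w. inverse (hh w) *s s w) z k)
              = cov_deriv (omegaDyn \<h>) s z k"
      unfolding Let_def P_def[symmetric] hh_def[symmetric] e using key2[OF z hs ws] .
  qed
qed
end
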